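(* Let $F=\langle f_1,\ldots,f_k\rangle$ be a normalized solution to an instance $(\mathcal{T}_{initial},\mathcal{T}_{final},k)$ of Flip Distance, and let $C$ be a component of $\mathcal{D}_F$. Let $f_i$ and $f_h$, with $i<h$, be two flips in $C$ such that $\epsilon(f_i)=\epsilon(f_h)$. Then there is a directed path from $f_i$ to $f_h$ in $C$.
   Context: A triangulation of a finite point set $\mathcal{P}$ in the plane is a partition of the convex hull of $\mathcal{P}$ into triangles whose vertex set is $\mathcal{P}$. For an interior edge $e$ of a triangulation $\mathcal{T}$, the quadrilateral associated with $e$ is the union of the two triangles of $\mathcal{T}$ sharing $e$. A flip $f$ with underlying edge $\epsilon(f)=e$ is admissible in $\mathcal{T}$ if $e\in\mathcal{T}$ and its associated quadrilateral is convex; performing it replaces $e$ by the other diagonal $\phi(f)$ of that quadrilateral. Two distinct edges share a triangle in $\mathcal{T}$ if they are edges of the same triangle of $\mathcal{T}$. A sequence $F=\langle f_1,\ldots,f_r\rangle$ is valid with respect to $\mathcal{T}$ if there are triangulations $\mathcal{T}_0=\mathcal{T},\mathcal{T}_1,\ldots,\mathcal{T}_r$ such that $f_i$ is admissible in $\mathcal{T}_{i-1}$ and performing it yields $\mathcal{T}_i$; then we write $\mathcal{T}\xrightarrow{F}\mathcal{T}_r$. Flips in a sequence are distinct objects even if they have the same underlying edge. For $1\le i<j\le r$, flip $f_j$ is adjacent to $f_i$ (written $f_i\to f_j$) if (1) either $\phi(f_i)=\epsilon(f_j)$ or $\phi(f_i)$ and $\epsilon(f_j)$ share a triangle in $\mathcal{T}_{j-1}$,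 and (2) there is no $p$ with $i<p<j$ and $\epsilon(f_p)=\phi(f_i)$. $\mathcal{D}_F$ is the directed acyclic graph whose nodes are the flips of $F$ and whose arcs are the pairs $f_i\to f_j$; a component of it is a weakly connected component. The flip distance between two triangulations is the minimum length of a valid sequence transforming one into the other. An instance $(\mathcal{T}_{initial},\mathcal{T}_{final},k)$ of Flip Distance consists of two triangulations of $\mathcal{P}$ and $k\in\mathbb{N}$; a solution is a valid sequence $F$ of length $k$ with $\mathcal{T}_{initial}\xrightarrow{F}\mathcal{T}_{final}$, where $k$ is the flip distance between them. For a solution $F=\langle f_1,\ldots,f_k\rangle$, $\mathcal{T}_j$ denotes the outcome of applying $\langle f_1,\ldots,f_j\rangle$ to $\mathcal{T}_{initial}$. A changed edge is an edge of $\mathcal{T}_{initial}$ not in $\mathcal{T}_{final}$; a component of $\mathcal{D}_F$ is essential if it contains a flip whose underlying edge is a changed edge. A solution $F$ is normalized if every component of $\mathcal{D}_F$ is essential and the flips of each component of $\mathcal{D}_F$ appear as a consecutive block in $F$. *)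

theory Defs
  imports "HOL-Analysis.Analysis"
begin

type_synonym pt = "real \<times> real"
type_synonym triang = "pt set set"   (* a triangulation = set of triangles, each a 3-set of points *)
type_synonym edge = "pt set"

definition triangulation :: "pt set \<Rightarrow> triang \<Rightarrow> bool" where
  "triangulation P T \<longleftrightarrow> finite P \<and>
     (\<forall>t\<in>T. t \<subseteq> P \<and> card t = 3 \<and> \<not> collinear t) \<and>
     \<Union>T = P \<and>
     \<Union>((\<lambda>t. convex hull t) ` T) = convex hull P \<and>
     (\<forall>t\<in>T. \<forall>s\<in>T. convex hull t \<inter> convex hull s = convex hull (t \<inter> s))"

definition edges :: "triang \<Rightarrow> edge set" where
  "edges T = {e. card e = 2 \<and> (\<exists>t\<in>T. e \<subseteq> t)}"

definition interior_edge :: "triang \<Rightarrow> edge \<Rightarrow> bool" where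
  "interior_edge T e \<longleftrightarrow> e \<in> edges T \<and> card {t\<in>T. e \<subseteq> t} = 2"

definition quad :: "triang \<Rightarrow> edge \<Rightarrow> pt set" where
  "quad T e = \<Union>{t\<in>T. e \<subseteq> t}"

definition convex_quad :: "pt set \<Rightarrow> bool" where
  "convex_quad Q \<longleftrightarrow> card Q = 4 \<and> (\<forall>p\<in>Q. p \<notin> convex hull (Q - {p}))"

definition admissible :: "triang \<Rightarrow> edge \<Rightarrow> bool" where
  "admissible T e \<longleftrightarrow> interior_edge T e \<and> convex_quad (quad T e)"

text \<open>the other diagonal of the quadrilateral, i.e. the new edge phi(f)\<close>
definition new_diag :: "triang \<Rightarrow> edge \<Rightarrow> edge" where
  "new_diag T e = quad T e - e"

definition do_flip :: "triang \<Rightarrow> edge \<Rightarrow> triang" where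
  "do_flip T e = {t\<in>T. \<not> e \<subseteq> t} \<union> {insert x (new_diag T e) | x. x \<in> e}"

text \<open>A flip sequence is represented by the list of underlying edges; the
 i-th list entry (0-based) is the flip f_(i+1) of the paper.\<close>
fun valid :: "triang \<Rightarrow> edge list \<Rightarrow> bool" where
  "valid T [] = True"
| "valid T (e # es) = (admissible T e \<and> valid (do_flip T e) es)"

fun apply_flips :: "triang \<Rightarrow> edge list \<Rightarrow> triang" where
  "apply_flips T [] = T"
| "apply_flips T (e # es) = apply_flips (do_flip T e) es"

text \<open>triangulation before the flip with 0-based index j (T_j in the paper's
 1-based indexing after j flips)\<close>
definition tri_at :: "triang \<Rightarrow> edge list \<Rightarrow> nat \<Rightarrow> triang" where
  "tri_at T F j = apply_flips T (take j F)"

definition phi :: "triang \<Rightarrow> edge list \<Rightarrow> nat \<Rightarrow> edge" where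
  "phi T F i = new_diag (tri_at T F i) (F ! i)"

definition share_triangle :: "triang \<Rightarrow> edge \<Rightarrow> edge \<Rightarrow> bool" where
  "share_triangle T e e' \<longleftrightarrow> e \<noteq> e' \<and> (\<exists>t\<in>T. e \<subseteq> t \<and> e' \<subseteq> t)"

text \<open>arcs of D_F, on 0-based flip indices\<close>
definition adj :: "triang \<Rightarrow> edge list \<Rightarrow> (nat \<times> nat) set" where
  "adj T F = {(i, j). i < j \<and> j < length F \<and>
      (phi T F i = F ! j \<or> share_triangle (tri_at T F j) (phi T F i) (F ! j)) \<and>
      \<not> (\<exists>p. i < p \<and> p < j \<and> F ! p = phi T F i)}"

definition component :: "triang \<Rightarrow> edge list \<Rightarrow> nat \<Rightarrow> nat set" where
  "component T F i = {j. j < length F \<and> (i, j) \<in> (adj T F \<union> (adj T F)\<inverse>)\<^sup>*}"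

definition components :: "triang \<Rightarrow> edge list \<Rightarrow> nat set set" where
  "components T F = {component T F i | i. i < length F}"

definition flip_distance :: "triang \<Rightarrow> triang \<Rightarrow> nat" where
  "flip_distance T T' = (LEAST k. \<exists>F. valid T F \<and> apply_flips T F = T' \<and> length F = k)"

definition is_solution :: "pt set \<Rightarrow> triang \<Rightarrow> triang \<Rightarrow> nat \<Rightarrow> edge list \<Rightarrow> bool" where
  "is_solution P Ti Tf k F \<longleftrightarrow> triangulation P Ti \<and> triangulation P Tf \<and>
     k = flip_distance Ti Tf \<and> length F = k \<and> valid Ti F \<and> apply_flips Ti F = Tf"

definition changed_edge :: "triang \<Rightarrow> triang \<Rightarrow> edge \<Rightarrow> bool" where
  "changed_edge Ti Tf e \<longleftrightarrow> e \<in> edges Ti \<and> e \<notin> edges Tf"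

definition essential :: "triang \<Rightarrow> triang \<Rightarrow> edge list \<Rightarrow> nat set \<Rightarrow> bool" where
  "essential Ti Tf F C \<longleftrightarrow> (\<exists>p\<in>C. changed_edge Ti Tf (F ! p))"

definition normalized :: "pt set \<Rightarrow> triang \<Rightarrow> triang \<Rightarrow> nat \<Rightarrow> edge list \<Rightarrow> bool" where
  "normalized P Ti Tf k F \<longleftrightarrow> is_solution P Ti Tf k F \<and>
     (\<forall>C\<in>components Ti F. essential Ti Tf F C \<and> (\<exists>a b. C = {a..<b}))"

end

theory Submission
  imports Defs
begin

definition det2 :: "pt \<Rightarrow> pt \<Rightarrow> real" where
  "det2 u v = fst u * snd v - snd u * fst v"

definition bA :: "pt \<Rightarrow> pt \<Rightarrow> pt \<Rightarrow> pt \<Rightarrow> real" where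
  "bA a b c x = det2 (b - x) (c - x) / det2 (b - a) (c - a)"

lemma det_rot1: "det2 (c - b) (a - b) = det2 (b - a) (c - a)"
  unfolding det2_def by (simp add: algebra_simps)
lemma det_rot2: "det2 (a - c) (b - c) = det2 (b - a) (c - a)"
  unfolding det2_def by (simp add: algebra_simps)
lemma det_swap: "det2 (c - a) (b - a) = - det2 (b - a) (c - a)"
  unfolding det2_def by (simp add: algebra_simps)

lemma bary_sum:
  assumes "det2 (b - a) (c - a) \<noteq> 0"
  shows "bA a b c x + bA b c a x + bA c a b x = 1"
proof -
  have "det2 (b - x) (c - x) + det2 (c - x) (a - x) + det2 (a - x) (b - x) = det2 (b - a) (c - a)"
    unfolding det2_def by (simp add: algebra_simps)
  moreover have "det2 (c - b) (a - b) = det2 (b - a) (c - a)" "det2 (a - c) (b - c) = det2 (b - a) (c - a)"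
    by (rule det_rot1, rule det_rot2)
  ultimately show ?thesis using assms unfolding bA_def
    by (simp only:) (simp add: add_divide_distrib[symmetric])
qed

lemma bary_decomp:
  assumes D: "det2 (b - a) (c - a) \<noteq> 0"
  shows "x = bA a b c x *\<^sub>R a + bA b c a x *\<^sub>R b + bA c a b x *\<^sub>R c"
proof -
  let ?D = "det2 (b - a) (c - a)"
  have 1: "fst x * ?D = det2 (b - x) (c - x) * fst a + det2 (c - x) (a - x) * fst b + det2 (a - x) (b - x) * fst c"
    unfolding det2_def by (simp add: algebra_simps)
  have 2: "snd x * ?D = det2 (b - x) (c - x) * snd a + det2 (c - x) (a - x) * snd b + det2 (a - x) (b - x) * snd c"
    unfolding det2_def by (simp add: algebra_simps)
  have r: "det2 (c - b) (a - b) = ?D" "det2 (a - c) (b - c) = ?D"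
    by (rule det_rot1, rule det_rot2)
  show ?thesis
    unfolding bA_def r prod_eq_iff
    using 1 2 D by (simp add: field_simps)
qed

lemma bary_eq:
  assumes D: "det2 (b - a) (c - a) \<noteq> 0" and s: "u + v + w = 1"
  shows "bA a b c (u *\<^sub>R a + v *\<^sub>R b + w *\<^sub>R c) = u"
proof -
  have w: "w = 1 - u - v" using s by simp
  have "det2 (b - (u *\<^sub>R a + v *\<^sub>R b + w *\<^sub>R c)) (c - (u *\<^sub>R a + v *\<^sub>R b + w *\<^sub>R c)) = u * det2 (b - a) (c - a)"
    unfolding det2_def w by (simp add: algebra_simps)
  then show ?thesis using D unfolding bA_def by simp
qed

lemma open_pos_bary:
  "open {x. 0 < bA a b c x \<and> 0 < bA b c a x \<and> 0 < bA c a b x}"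
proof -
  have "open {x. 0 < bA a b c x}" "open {x. 0 < bA b c a x}" "open {x. 0 < bA c a b x}"
    unfolding bA_def det2_def divide_inverse
    by (intro open_Collect_less continuous_intros)+
  then have "open ({x. 0 < bA a b c x} \<inter> {x. 0 < bA b c a x} \<inter> {x. 0 < bA c a b x})"
    by auto
  then show ?thesis by (simp add: Collect_conj_eq Int_assoc)
qed

lemma pos_bary_interior:
  assumes D: "det2 (b - a) (c - a) \<noteq> 0"
    and "0 < bA a b c x" "0 < bA b c a x" "0 < bA c a b x"
  shows "x \<in> interior (convex hull {a,b,c})"
proof -
  have sub: "{x. 0 < bA a b c x \<and> 0 < bA b c a x \<and> 0 < bA c a b x} \<subseteq> convex hull {a,b,c}"
  proof
    fix y assume y: "y \<in> {x. 0 < bA a b c x \<and> 0 < bA b c a x \<and> 0 < bA c a b x}"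
    show "y \<in> convex hull {a,b,c}"
      unfolding convex_hull_3
      using y bary_sum[OF D, of y] bary_decomp[OF D, of y]
      by (intro CollectI exI[of _ "bA a b c y"] exI[of _ "bA b c a y"] exI[of _ "bA c a b y"]) auto
  qed
  show ?thesis
    using interior_maximal[OF sub open_pos_bary] assms by auto
qed

lemma comb_interior:
  assumes D: "det2 (b - a) (c - a) \<noteq> 0"
    and s: "u + v + w = 1" and pos: "0 < u" "0 < v" "0 < w"
  shows "u *\<^sub>R a + v *\<^sub>R b + w *\<^sub>R c \<in> interior (convex hull {a,b,c})"
proof (rule pos_bary_interior[OF D])
  have D2: "det2 (c - b) (a - b) \<noteq> 0" "det2 (a - c) (b - c) \<noteq> 0"
    using D by (simp_all add: det_rot1 det_rot2)
  have e1: "u *\<^sub>R a + v *\<^sub>R b + w *\<^sub>R c = v *\<^sub>R b + w *\<^sub>R c + u *\<^sub>R a"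
    and e2: "u *\<^sub>R a + v *\<^sub>R b + w *\<^sub>R c = w *\<^sub>R c + u *\<^sub>R a + v *\<^sub>R b"
    by (simp_all add: algebra_simps)
  show "0 < bA a b c (u *\<^sub>R a + v *\<^sub>R b + w *\<^sub>R c)" using bary_eq[OF D s] pos by simp
  show "0 < bA b c a (u *\<^sub>R a + v *\<^sub>R b + w *\<^sub>R c)"
    unfolding e1 using bary_eq[OF D2(1), of v w u] s pos by simp
  show "0 < bA c a b (u *\<^sub>R a + v *\<^sub>R b + w *\<^sub>R c)"
    unfolding e2 using bary_eq[OF D2(2), of w u v] s pos by simp
qed

lemma interior_nonempty3:
  assumes D: "det2 (b - a) (c - a) \<noteq> 0"
  shows "interior (convex hull {a,b,c}) \<noteq> {}"
  using comb_interior[OF D, of "1/3" "1/3" "1/3"] by auto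

lemma hull3_closure:
  assumes D: "det2 (b - a) (c - a) \<noteq> 0"
  shows "convex hull {a,b,c} \<subseteq> closure (interior (convex hull {a,b,c}))"
proof -
  have "closure (convex hull {a,b,c}) = convex hull {a,b,c}"
    by (simp add: closure_convex_hull finite_imp_compact)
  then show ?thesis
    using convex_closure_interior[OF convex_convex_hull interior_nonempty3[OF D]] by simp
qed

lemma open_meets_hull3:
  assumes D: "det2 (b - a) (c - a) \<noteq> 0" and U: "open U" and ne: "U \<inter> convex hull {a,b,c} \<noteq> {}"
  shows "U \<inter> interior (convex hull {a,b,c}) \<noteq> {}"
proof
  assume "U \<inter> interior (convex hull {a,b,c}) = {}"
  then have "U \<inter> closure (interior (convex hull {a,b,c})) = {}"
    using open_Int_closure_eq_empty[OF U] by blast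
  then show False using ne hull3_closure[OF D] by blast
qed

lemma det_cyc: "det2 (c - a) (d - a) = det2 (d - c) (a - c)"
  unfolding det2_def by (simp add: algebra_simps)

lemma same_side_meet:
  assumes ga: "0 < det2 (d - c) (a - c)" and gz: "0 < det2 (d - c) (z - c)"
  shows "interior (convex hull {c,d,a}) \<inter> interior (convex hull {c,d,z}) \<noteq> {}"
proof -
  define D1 where "D1 = det2 (d - c) (a - c)"
  define D2 where "D2 = det2 (d - c) (z - c)"
  have D1: "D1 \<noteq> 0" "D1 > 0" and D2: "D2 \<noteq> 0" "D2 > 0" using ga gz by (auto simp: D1_def D2_def)
  define \<alpha> where "\<alpha> = bA c d z a"
  define \<beta> where "\<beta> = bA d z c a"
  define \<gamma> where "\<gamma> = bA z c d a"
  have dec: "a = \<alpha> *\<^sub>R c + \<beta> *\<^sub>R d + \<gamma> *\<^sub>R z"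
    using bary_decomp[of d c z a] D2 unfolding \<alpha>_def \<beta>_def \<gamma>_def D2_def by simp
  have sum: "\<alpha> + \<beta> + \<gamma> = 1"
    using bary_sum[of d c z a] D2 unfolding \<alpha>_def \<beta>_def \<gamma>_def D2_def by simp
  have "\<gamma> = D1 / D2"
    unfolding \<gamma>_def bA_def D1_def D2_def unfolding det2_def by (simp add: algebra_simps)
  then have gpos: "\<gamma> > 0" using D1 D2 by simp
  define t where "t = 1 / (2 + 2 * \<bar>\<alpha>\<bar> + 2 * \<bar>\<beta>\<bar>)"
  have tpos: "0 < t" and t1: "t < 1" unfolding t_def by (auto simp: divide_simps)
  have ta: "t * (1 + 2 * \<bar>\<alpha>\<bar>) < 1" and tb: "t * (1 + 2 * \<bar>\<beta>\<bar>) < 1"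
    unfolding t_def by (auto simp: divide_simps)
  define y where "y = ((1 - t) / 2) *\<^sub>R c + ((1 - t) / 2) *\<^sub>R d + t *\<^sub>R a"
  have "y \<in> interior (convex hull {c,d,a})"
    unfolding y_def by (rule comb_interior) (use D1 tpos t1 in \<open>auto simp: D1_def\<close>)
  moreover have "y \<in> interior (convex hull {c,d,z})"
  proof -
    have yeq: "y = ((1 - t) / 2 + t * \<alpha>) *\<^sub>R c + ((1 - t) / 2 + t * \<beta>) *\<^sub>R d + (t * \<gamma>) *\<^sub>R z"
      unfolding y_def dec by (simp add: algebra_simps)
    have p1: "0 < (1 - t) / 2 + t * \<alpha>"
    proof -
      have "- \<bar>\<alpha>\<bar> \<le> \<alpha>" by simp
      then have "t * (- \<bar>\<alpha>\<bar>) \<le> t * \<alpha>" using tpos by (intro mult_left_mono) auto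
      then have "- (t * \<bar>\<alpha>\<bar>) \<le> t * \<alpha>" by simp
      moreover have "t + 2 * (t * \<bar>\<alpha>\<bar>) < 1" using ta by (simp add: algebra_simps)
      ultimately have "0 < 1 - t + 2 * (t * \<alpha>)" by linarith
      then show ?thesis by (simp add: field_simps)
    qed
    have p2: "0 < (1 - t) / 2 + t * \<beta>"
    proof -
      have "- \<bar>\<beta>\<bar> \<le> \<beta>" by simp
      then have "t * (- \<bar>\<beta>\<bar>) \<le> t * \<beta>" using tpos by (intro mult_left_mono) auto
      then have "- (t * \<bar>\<beta>\<bar>) \<le> t * \<beta>" by simp
      moreover have "t + 2 * (t * \<bar>\<beta>\<bar>) < 1" using tb by (simp add: algebra_simps)
      ultimately have "0 < 1 - t + 2 * (t * \<beta>)" by linarith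
      then show ?thesis by (simp add: field_simps)
    qed
    have s: "((1 - t) / 2 + t * \<alpha>) + ((1 - t) / 2 + t * \<beta>) + t * \<gamma> = 1"
    proof -
      have "t * (\<alpha> + \<beta> + \<gamma>) = t" using sum by simp
      then have st: "t*\<alpha> + t*\<beta> + t*\<gamma> = t" by (simp add: distrib_left)
      have "(1 - t) / 2 + (1 - t) / 2 = 1 - t" by simp
      then show ?thesis using st by linarith
    qed
    show ?thesis unfolding yeq
      by (rule comb_interior) (use D2 s p1 p2 gpos tpos in \<open>auto simp: D2_def\<close>)
  qed
  ultimately show ?thesis by blast
qed

lemma same_side_meet':
  assumes "0 < det2 (d - c) (a - c) * det2 (d - c) (z - c)"
  shows "interior (convex hull {c,d,a}) \<inter> interior (convex hull {c,d,z}) \<noteq> {}"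
proof (cases "0 < det2 (d - c) (a - c)")
  case True
  then have "0 < det2 (d - c) (z - c)" using assms zero_less_mult_pos by blast
  then show ?thesis using same_side_meet True by blast
next
  case False
  have sw: "\<And>x. det2 (c - d) (x - d) = - det2 (d - c) (x - c)"
    unfolding det2_def by (simp add: algebra_simps)
  have "det2 (d - c) (a - c) < 0" "det2 (d - c) (z - c) < 0"
    using False assms by (auto simp: zero_less_mult_iff)
  then have "interior (convex hull {d,c,a}) \<inter> interior (convex hull {d,c,z}) \<noteq> {}"
    by (intro same_side_meet) (auto simp: sw)
  then show ?thesis by (simp add: insert_commute)
qed

lemma det_inner: "det2 u x = (- snd u, fst u) \<bullet> x"
  unfolding det2_def by (simp add: inner_prod_def algebra_simps)

lemma opp_side_disjoint:
  assumes "det2 (b - a) (c - a) * det2 (b - a) (d - a) < 0"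
  shows "interior (convex hull {a,b,c}) \<inter> interior (convex hull {a,b,d}) = {}"
proof -
  define w where "w = (- snd (b - a), fst (b - a))"
  have hx: "\<And>x. det2 (b - a) (x - a) = w \<bullet> x - w \<bullet> a"
    unfolding w_def det_inner by (simp add: inner_diff_right)
  have wnz: "w \<noteq> 0"
  proof
    assume "w = 0"
    then have "det2 (b - a) (c - a) = 0" unfolding hx by simp
    then show False using assms by simp
  qed
  have key: "convex hull {a,b,x} \<subseteq> {y. w \<bullet> y \<ge> w \<bullet> a}" if "det2 (b - a) (x - a) \<ge> 0" for x
  proof (rule hull_minimal)
    have "w \<bullet> b = w \<bullet> a" using hx[of b] unfolding det2_def by simp
    then show "{a, b, x} \<subseteq> {y. w \<bullet> a \<le> w \<bullet> y}" using that hx[of x] by auto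
  qed (rule convex_halfspace_ge)
  have key2: "convex hull {a,b,x} \<subseteq> {y. w \<bullet> y \<le> w \<bullet> a}" if "det2 (b - a) (x - a) \<le> 0" for x
  proof (rule hull_minimal)
    have "w \<bullet> b = w \<bullet> a" using hx[of b] unfolding det2_def by simp
    then show "{a, b, x} \<subseteq> {y. w \<bullet> y \<le> w \<bullet> a}" using that hx[of x] by auto
  qed (rule convex_halfspace_le)
  have "convex hull {a,b,c} \<inter> convex hull {a,b,d} \<subseteq> {y. w \<bullet> y = w \<bullet> a}"
  proof (cases "det2 (b - a) (c - a) \<ge> 0")
    case True
    then have "det2 (b - a) (d - a) \<le> 0" using assms
      by (metis linorder_not_le mult_nonneg_nonneg order_less_imp_le mult_less_0_iff)
    then show ?thesis using key[OF True] key2[of d] by force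
  next
    case False
    then have "det2 (b - a) (d - a) \<ge> 0" using assms
      by (metis linorder_not_le mult_less_0_iff order_less_imp_le)
    then show ?thesis using key2[of c] False key[of d] by force
  qed
  then have "interior (convex hull {a,b,c} \<inter> convex hull {a,b,d}) = {}"
    using interior_mono interior_hyperplane[OF wnz] by blast
  then show ?thesis by simp
qed

lemma par_vec:
  assumes "det2 u v = 0" "u \<noteq> 0"
  shows "\<exists>k. v = k *\<^sub>R u"
proof -
  obtain u1 u2 v1 v2 where uv: "u = (u1, u2)" "v = (v1, v2)" by (cases u, cases v) auto
  have d: "u1 * v2 = u2 * v1" using assms(1) unfolding uv det2_def by simp
  have nz: "u1 * u1 + u2 * u2 \<noteq> 0" using assms(2) unfolding uv
    by (auto simp: sum_squares_eq_zero_iff zero_prod_def)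
  define k where "k = (u1 * v1 + u2 * v2) / (u1 * u1 + u2 * u2)"
  have "v1 = k * u1"
  proof -
    have "k * u1 * (u1 * u1 + u2 * u2) = (u1 * v1 + u2 * v2) * u1" unfolding k_def using nz by simp
    also have "\<dots> = v1 * (u1 * u1 + u2 * u2)" using d by (simp add: algebra_simps)
    finally show ?thesis using nz mult_right_cancel by metis
  qed
  moreover have "v2 = k * u2"
  proof -
    have "k * u2 * (u1 * u1 + u2 * u2) = (u1 * v1 + u2 * v2) * u2" unfolding k_def using nz by simp
    also have "\<dots> = v2 * (u1 * u1 + u2 * u2)" using d by (simp add: algebra_simps)
    finally show ?thesis using nz mult_right_cancel by metis
  qed
  ultimately show ?thesis unfolding uv by auto
qed

lemma split_tri:
  assumes p: "p = (1 - s) *\<^sub>R a + s *\<^sub>R b" and s: "0 \<le> s" "s \<le> 1"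
  shows "convex hull {a,b,q} \<subseteq> convex hull {a,p,q} \<union> convex hull {p,b,q}"
proof
  fix x assume "x \<in> convex hull {a,b,q}"
  then obtain u v w where x: "x = u *\<^sub>R a + v *\<^sub>R b + w *\<^sub>R q" and uvw: "0 \<le> u" "0 \<le> v" "0 \<le> w" "u + v + w = 1"
    unfolding convex_hull_3 by auto
  show "x \<in> convex hull {a,p,q} \<union> convex hull {p,b,q}"
  proof (cases "s = 0")
    case True then have "p = a" using p by simp
    then show ?thesis using \<open>x \<in> convex hull {a,b,q}\<close> by auto
  next
    case s0: False
    show ?thesis
    proof (cases "s = 1")
      case True then have "p = b" using p by simp
      then show ?thesis using \<open>x \<in> convex hull {a,b,q}\<close> by (auto simp: insert_commute)
    next
      case s1: False
      have sp: "0 < s" "s < 1" using s s0 s1 by auto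
      show ?thesis
      proof (cases "v * (1 - s) \<le> u * s")
        case True
        define \<beta> where "\<beta> = v / s"
        define \<alpha> where "\<alpha> = u - v * (1 - s) / s"
        have a0: "0 \<le> \<alpha>" unfolding \<alpha>_def using True sp by (simp add: field_simps)
        have b0: "0 \<le> \<beta>" unfolding \<beta>_def using sp uvw by simp
        have c1: "u = \<alpha> + \<beta> * (1 - s)" "v = \<beta> * s" unfolding \<alpha>_def \<beta>_def using sp by (simp_all add: field_simps)
        have xe': "x = (\<alpha> + \<beta> * (1 - s)) *\<^sub>R a + (\<beta> * s) *\<^sub>R b + w *\<^sub>R q" using c1 x by simp
        have xe: "x = \<alpha> *\<^sub>R a + \<beta> *\<^sub>R p + w *\<^sub>R q"
          unfolding xe' p by (simp add: algebra_simps)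
        have se: "\<alpha> + \<beta> + w = 1" using c1 uvw(4) by (simp add: algebra_simps)
        have "x \<in> convex hull {a,p,q}" unfolding convex_hull_3 using xe se a0 b0 uvw by blast
        then show ?thesis by blast
      next
        case False
        define \<beta> where "\<beta> = u / (1 - s)"
        define \<gamma> where "\<gamma> = v - u * s / (1 - s)"
        have g0: "0 \<le> \<gamma>" unfolding \<gamma>_def using False sp by (simp add: field_simps)
        have b0: "0 \<le> \<beta>" unfolding \<beta>_def using sp uvw by simp
        have c1a: "u = \<beta> * (1 - s)" unfolding \<beta>_def using sp by simp
        have c1b: "v = \<gamma> + \<beta> * s" unfolding \<gamma>_def \<beta>_def by simp
        note c1 = c1a c1b
        have xe': "x = (\<beta> * (1 - s)) *\<^sub>R a + (\<gamma> + \<beta> * s) *\<^sub>R b + w *\<^sub>R q" using c1 x by simp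
        have xe: "x = \<beta> *\<^sub>R p + \<gamma> *\<^sub>R b + w *\<^sub>R q"
          unfolding xe' p by (simp add: algebra_simps)
        have se: "\<beta> + \<gamma> + w = 1" using c1 uvw(4) by (simp add: algebra_simps)
        have "x \<in> convex hull {p,b,q}" unfolding convex_hull_3 using xe se g0 b0 uvw by blast
        then show ?thesis by blast
      qed
    qed
  qed
qed

lemma crossing:
  assumes opp: "det2 (d - c) (a - c) * det2 (d - c) (b - c) < 0"
    and nc: "c \<notin> convex hull {d,a,b}" and nd: "d \<notin> convex hull {c,a,b}"
  shows "det2 (b - a) (c - a) * det2 (b - a) (d - a) < 0"
    and "convex hull {a,b,c} \<subseteq> convex hull {c,d,a} \<union> convex hull {c,d,b}"
    and "convex hull {a,b,d} \<subseteq> convex hull {c,d,a} \<union> convex hull {c,d,b}"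
proof -
  define ga where "ga = det2 (d - c) (a - c)"
  define gb where "gb = det2 (d - c) (b - c)"
  have opp': "ga * gb < 0" using opp unfolding ga_def gb_def .
  have gne: "ga - gb \<noteq> 0"
  proof
    assume "ga - gb = 0" then have "ga = gb" by simp
    then show False using opp' by (metis not_square_less_zero)
  qed
  define s where "s = ga / (ga - gb)"
  have sg: "s * (ga - gb) = ga" unfolding s_def using gne by simp
  have s01: "0 < s" "s < 1"
  proof -
    have "(0 < ga \<and> gb < 0) \<or> (ga < 0 \<and> 0 < gb)" using opp' by (auto simp: mult_less_0_iff)
    then show "0 < s" "s < 1" unfolding s_def by (auto simp: divide_simps)
  qed
  define p where "p = (1 - s) *\<^sub>R a + s *\<^sub>R b"
  have "det2 (d - c) (p - c) = (1 - s) * ga + s * gb"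
    unfolding p_def ga_def gb_def det2_def by (simp add: algebra_simps)
  also have "\<dots> = 0" using sg by (simp add: algebra_simps)
  finally have dp: "det2 (d - c) (p - c) = 0" .
  have une: "d - c \<noteq> 0"
  proof
    assume "d - c = 0" then have "ga = 0" unfolding ga_def det2_def by simp
    then show False using opp' by simp
  qed
  obtain \<mu> where mu: "p - c = \<mu> *\<^sub>R (d - c)" using par_vec[OF dp une] by blast
  have pab: "p \<in> convex hull {a,b}" unfolding convex_hull_2 p_def using s01 by force
  have mpos: "0 < \<mu>"
  proof (rule ccontr)
    assume "\<not> 0 < \<mu>" then have m0: "\<mu> \<le> 0" by simp
    have "c = (1 / (1 - \<mu>)) *\<^sub>R p + (- \<mu> / (1 - \<mu>)) *\<^sub>R d"
    proof -
      have "p = c + \<mu> *\<^sub>R (d - c)" using mu by (simp add: algebra_simps)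
      then have "(1 - \<mu>) *\<^sub>R c = p - \<mu> *\<^sub>R d" by (simp add: algebra_simps)
      then have eqc: "(1 / (1 - \<mu>)) *\<^sub>R ((1 - \<mu>) *\<^sub>R c) = (1 / (1 - \<mu>)) *\<^sub>R (p - \<mu> *\<^sub>R d)" by simp
      have nz: "1 - \<mu> \<noteq> 0" using m0 by simp
      have "(1 / (1 - \<mu>)) *\<^sub>R ((1 - \<mu>) *\<^sub>R c) = c" using nz by simp
      then have "c = (1 / (1 - \<mu>)) *\<^sub>R (p - \<mu> *\<^sub>R d)" using eqc by simp
      then show ?thesis by (simp add: algebra_simps)
    qed
    then have "c \<in> convex hull {p,d}" unfolding convex_hull_2 using m0
      by (intro CollectI exI[of _ "1 / (1 - \<mu>)"] exI[of _ "- \<mu> / (1 - \<mu>)"]) (auto simp: divide_simps)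
    moreover have "convex hull {p,d} \<subseteq> convex hull {d,a,b}"
    proof (rule convex_hull_subset)
      have "p \<in> convex hull {d,a,b}" using pab hull_mono[of "{a,b}" "{d,a,b}"] by blast
      then show "{p, d} \<subseteq> convex hull {d, a, b}" by (auto intro: hull_inc)
    qed
    ultimately show False using nc by blast
  qed
  have mlt: "\<mu> < 1"
  proof (rule ccontr)
    assume "\<not> \<mu> < 1" then have m1: "1 \<le> \<mu>" by simp
    have "d = (1 - 1 / \<mu>) *\<^sub>R c + (1 / \<mu>) *\<^sub>R p"
    proof -
      have "p = c + \<mu> *\<^sub>R (d - c)" using mu by (simp add: algebra_simps)
      then have e1: "(1 / \<mu>) *\<^sub>R p = (1 / \<mu>) *\<^sub>R c + (1 / \<mu>) *\<^sub>R (\<mu> *\<^sub>R (d - c))"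
        by (simp add: scaleR_right_distrib)
      have "(1 / \<mu>) *\<^sub>R (\<mu> *\<^sub>R (d - c)) = d - c" using m1 by simp
      then have "(1 / \<mu>) *\<^sub>R p = (1 / \<mu>) *\<^sub>R c + (d - c)" using e1 by simp
      then show ?thesis by (simp add: algebra_simps)
    qed
    then have "d \<in> convex hull {c,p}" unfolding convex_hull_2 using m1
      by (intro CollectI exI[of _ "1 - 1 / \<mu>"] exI[of _ "1 / \<mu>"]) (auto simp: divide_simps)
    moreover have "convex hull {c,p} \<subseteq> convex hull {c,a,b}"
    proof (rule convex_hull_subset)
      have "p \<in> convex hull {c,a,b}" using pab hull_mono[of "{a,b}" "{c,a,b}"] by blast
      then show "{c, p} \<subseteq> convex hull {c, a, b}" by (auto intro: hull_inc)
    qed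
    ultimately show False using nd by blast
  qed
  have pcd: "p \<in> convex hull {c,d}"
  proof -
    have "p = (1 - \<mu>) *\<^sub>R c + \<mu> *\<^sub>R d" using mu by (simp add: algebra_simps)
    then show ?thesis unfolding convex_hull_2 using mpos mlt by force
  qed
  define K where "K = det2 (b - a) (d - c)"
  have K: "K = ga - gb" unfolding K_def ga_def gb_def det2_def by (simp add: algebra_simps)
  have ca: "c - a = s *\<^sub>R (b - a) - \<mu> *\<^sub>R (d - c)"
    using mu unfolding p_def by (simp add: algebra_simps)
  have hc: "det2 (b - a) (c - a) = - \<mu> * K"
    unfolding ca K_def det2_def by (simp add: algebra_simps)
  have da: "d - a = s *\<^sub>R (b - a) + (1 - \<mu>) *\<^sub>R (d - c)"
    using mu unfolding p_def by (simp add: algebra_simps)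
  have hd: "det2 (b - a) (d - a) = (1 - \<mu>) * K"
    unfolding da K_def det2_def by (simp add: algebra_simps)
  have "det2 (b - a) (c - a) * det2 (b - a) (d - a) = - (\<mu> * (1 - \<mu>) * (K * K))"
    unfolding hc hd by (simp add: algebra_simps)
  moreover have "0 < \<mu> * (1 - \<mu>) * (K * K)"
  proof -
    have "K \<noteq> 0" using K gne by simp
    then have "0 < K * K" by (auto simp: zero_less_mult_iff linorder_neq_iff)
    moreover have "0 < \<mu> * (1 - \<mu>)" using mpos mlt by simp
    ultimately show ?thesis by simp
  qed
  ultimately show "det2 (b - a) (c - a) * det2 (b - a) (d - a) < 0" by simp
  have p01: "p = (1 - s) *\<^sub>R a + s *\<^sub>R b" "0 \<le> s" "s \<le> 1" using p_def s01 by auto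
  have pA: "p \<in> convex hull {c,d,a}" "p \<in> convex hull {c,d,b}"
    using pcd hull_mono[of "{c,d}" "{c,d,a}"] hull_mono[of "{c,d}" "{c,d,b}"] by blast+
  have s1: "convex hull {a,p,q} \<subseteq> convex hull {c,d,a}" if "q \<in> {c,d}" for q
    by (rule convex_hull_subset) (use pA that in \<open>auto intro: hull_inc\<close>)
  have s2: "convex hull {p,b,q} \<subseteq> convex hull {c,d,b}" if "q \<in> {c,d}" for q
    by (rule convex_hull_subset) (use pA that in \<open>auto intro: hull_inc\<close>)
  show "convex hull {a,b,c} \<subseteq> convex hull {c,d,a} \<union> convex hull {c,d,b}"
    using split_tri[OF p01, of c] s1[of c] s2[of c] by blast
  show "convex hull {a,b,d} \<subseteq> convex hull {c,d,a} \<union> convex hull {c,d,b}"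
    using split_tri[OF p01, of d] s1[of d] s2[of d] by blast
qed

definition ndg3 :: "pt set \<Rightarrow> bool" where
  "ndg3 t \<longleftrightarrow> (\<exists>a b c. t = {a,b,c} \<and> det2 (b - a) (c - a) \<noteq> 0)"

definition Inv :: "triang \<Rightarrow> bool" where
  "Inv T \<longleftrightarrow> (\<forall>t\<in>T. ndg3 t) \<and>
     (\<forall>t\<in>T. \<forall>s\<in>T. t \<noteq> s \<longrightarrow> interior (convex hull t) \<inter> interior (convex hull s) = {})"

lemma det_perm_eq:
  "det2 (a - b) (c - b) = - det2 (b - a) (c - a)"
  "det2 (c - b) (a - b) = det2 (b - a) (c - a)"
  "det2 (c - a) (b - a) = - det2 (b - a) (c - a)"
  "det2 (a - c) (b - c) = det2 (b - a) (c - a)"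
  "det2 (b - c) (a - c) = - det2 (b - a) (c - a)"
  unfolding det2_def by (simp_all add: algebra_simps)

lemma det_perm:
  "det2 (b - a) (c - a) \<noteq> 0 \<Longrightarrow> det2 (a - b) (c - b) \<noteq> 0"
  "det2 (b - a) (c - a) \<noteq> 0 \<Longrightarrow> det2 (c - b) (a - b) \<noteq> 0"
  "det2 (b - a) (c - a) \<noteq> 0 \<Longrightarrow> det2 (c - a) (b - a) \<noteq> 0"
  "det2 (b - a) (c - a) \<noteq> 0 \<Longrightarrow> det2 (a - c) (b - c) \<noteq> 0"
  "det2 (b - a) (c - a) \<noteq> 0 \<Longrightarrow> det2 (b - c) (a - c) \<noteq> 0"
  using det_perm_eq(1)[of a b c] det_perm_eq(2)[of a b c] det_perm_eq(3)[of a b c]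
    det_perm_eq(4)[of a b c] det_perm_eq(5)[of a b c] by simp_all

lemma det_distinct:
  assumes "det2 (b - a) (c - a) \<noteq> 0" shows "a \<noteq> b" "a \<noteq> c" "b \<noteq> c"
proof -
  show "a \<noteq> b" proof assume "a = b" then show False using assms by (simp add: det2_def) qed
  show "a \<noteq> c" proof assume "a = c" then show False using assms by (simp add: det2_def) qed
  show "b \<noteq> c" proof assume "b = c" then show False using assms by (simp add: det2_def mult.commute) qed
qed

lemma ndg_pick:
  assumes "ndg3 t" "c \<in> t" "d \<in> t" "c \<noteq> d"
  shows "\<exists>z. t = {c,d,z} \<and> det2 (d - c) (z - c) \<noteq> 0"
proof -
  obtain a b e where t: "t = {a,b,e}" and D: "det2 (b - a) (e - a) \<noteq> 0"
    using assms(1) unfolding ndg3_def by blast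
  note P = det_perm[OF D]
  have "(c = a \<and> d = b) \<or> (c = b \<and> d = a) \<or> (c = a \<and> d = e) \<or> (c = e \<and> d = a) \<or> (c = b \<and> d = e) \<or> (c = e \<and> d = b)"
    using assms(2-4) unfolding t by auto
  then show ?thesis
  proof (elim disjE conjE)
    assume "c = a" "d = b" then show ?thesis using D t by blast
  next
    assume "c = b" "d = a" then show ?thesis using P(1) t by (intro exI[of _ e]) (auto simp: insert_commute)
  next
    assume "c = a" "d = e" then show ?thesis using P(3) t by (intro exI[of _ b]) (auto simp: insert_commute)
  next
    assume "c = e" "d = a" then show ?thesis using P(4) t by (intro exI[of _ b]) (auto simp: insert_commute)
  next
    assume "c = b" "d = e" then show ?thesis using P(2) t by (intro exI[of _ a]) (auto simp: insert_commute)
  next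
    assume "c = e" "d = b" then show ?thesis using P(5) t by (intro exI[of _ a]) (auto simp: insert_commute)
  qed
qed

lemma Inv_ndg: "Inv T \<Longrightarrow> t \<in> T \<Longrightarrow> ndg3 t"
  unfolding Inv_def by blast

lemma Inv_disj: "Inv T \<Longrightarrow> t \<in> T \<Longrightarrow> s \<in> T \<Longrightarrow> t \<noteq> s \<Longrightarrow>
    interior (convex hull t) \<inter> interior (convex hull s) = {}"
  unfolding Inv_def by blast

lemma interior_hull2_empty:
  fixes x y :: pt
  shows "interior (convex hull {x,y}) = {}"
proof -
  obtain w :: pt where w: "w \<noteq> 0" "w \<bullet> y = w \<bullet> x"
  proof (cases "x = y")
    case True then show ?thesis using that[of "(1,0)"] by (simp add: zero_prod_def)
  next
    case False
    define w where "w = (- snd (y - x), fst (y - x))"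
    have "w \<noteq> 0" using False unfolding w_def by (auto simp: zero_prod_def prod_eq_iff)
    moreover have "w \<bullet> y = w \<bullet> x" unfolding w_def by (simp add: inner_prod_def algebra_simps)
    ultimately show ?thesis using that by blast
  qed
  have "convex hull {x,y} \<subseteq> {z. w \<bullet> z = w \<bullet> x}"
    by (rule hull_minimal) (use w in \<open>auto simp: convex_hyperplane\<close>)
  then show ?thesis using interior_mono interior_hyperplane[OF w(1)] by blast
qed

lemma small_card_sub2:
  assumes "finite A" "card A \<le> 2" shows "\<exists>x y. A \<subseteq> {x,y}"
proof -
  have "card A = 0 \<or> card A = 1 \<or> card A = 2" using assms(2) by auto
  then show ?thesis
  proof (elim disjE)
    assume "card A = 0" then show ?thesis using assms(1) by auto
  next
    assume "card A = 1" then obtain x where "A = {x}" by (rule card_1_singletonE)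
    then show ?thesis by blast
  next
    assume "card A = 2" then show ?thesis by (auto simp: card_2_iff)
  qed
qed

lemma Inv_init:
  assumes "triangulation P T" shows "Inv T"
  unfolding Inv_def
proof (intro conjI ballI impI)
  fix t assume tT: "t \<in> T"
  then have c3: "card t = 3" and nc: "\<not> collinear t" using assms unfolding triangulation_def by auto
  obtain a b c where t: "t = {a,b,c}" "a \<noteq> b" "b \<noteq> c" "a \<noteq> c" using c3 by (auto simp: card_3_iff)
  have "det2 (b - a) (c - a) \<noteq> 0"
  proof
    assume d0: "det2 (b - a) (c - a) = 0"
    have "b - a \<noteq> 0" using t by simp
    then obtain k where "c - a = k *\<^sub>R (b - a)" using par_vec[OF d0] by blast
    then have "collinear {0, b - a, c - a}" unfolding collinear_lemma by blast
    then have "collinear {b, a, c}" using collinear_3[of b a c] by simp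
    then show False using nc t by (simp add: insert_commute)
  qed
  then show "ndg3 t" unfolding ndg3_def using t by blast
next
  fix t s assume tT: "t \<in> T" and sT: "s \<in> T" and ne: "t \<noteq> s"
  have eq: "convex hull t \<inter> convex hull s = convex hull (t \<inter> s)" using assms tT sT unfolding triangulation_def by blast
  have c3: "card t = 3" "card s = 3" using assms tT sT unfolding triangulation_def by auto
  have fin: "finite t" "finite s" using c3 by (auto intro: card_ge_0_finite)
  have "card (t \<inter> s) \<le> 2"
  proof (rule ccontr)
    assume "\<not> card (t \<inter> s) \<le> 2"
    then have ge: "card (t \<inter> s) \<ge> 3" by simp
    have "card (t \<inter> s) \<le> card t" "card (t \<inter> s) \<le> card s" using fin by (auto intro: card_mono)
    then have "t \<inter> s = t" "t \<inter> s = s" using ge c3 fin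
      by (metis Int_lower1 Int_lower2 card_subset_eq le_antisym)+
    then show False using ne by simp
  qed
  then obtain x y where "t \<inter> s \<subseteq> {x,y}" using small_card_sub2 fin by blast
  then have "convex hull (t \<inter> s) \<subseteq> convex hull {x,y}" by (rule hull_mono)
  then have "interior (convex hull (t \<inter> s)) \<subseteq> interior (convex hull {x,y})" by (rule interior_mono)
  then have "interior (convex hull (t \<inter> s)) = {}" using interior_hull2_empty[of x y] by simp
  then have "interior (convex hull t \<inter> convex hull s) = {}" using eq by simp
  then show "interior (convex hull t) \<inter> interior (convex hull s) = {}" by simp
qed

lemma ins_pair_set: "{insert x S | x. x \<in> {c,d}} = {insert c S, insert d S}"
  by blast

lemma set3_perm: "{c,a,b} = {a,b,c}" by blast

lemma flip_struct:
  assumes I: "Inv T" and adm: "admissible T e"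
  obtains c d a b where "e = {c,d}" "c \<noteq> d" "{t\<in>T. e \<subseteq> t} = {{c,d,a},{c,d,b}}"
    "a \<noteq> b" "a \<noteq> c" "a \<noteq> d" "b \<noteq> c" "b \<noteq> d"
    "det2 (d - c) (a - c) * det2 (d - c) (b - c) < 0" "new_diag T e = {a,b}"
    "c \<notin> convex hull {d,a,b}" "d \<notin> convex hull {c,a,b}"
    "do_flip T e = {t\<in>T. \<not> e \<subseteq> t} \<union> {{c,a,b},{d,a,b}}"
proof -
  have ie: "interior_edge T e" and cq: "convex_quad (quad T e)" using adm unfolding admissible_def by auto
  then have "card e = 2" unfolding interior_edge_def edges_def by auto
  then obtain c d where e: "e = {c,d}" and cd: "c \<noteq> d" by (auto simp: card_2_iff)
  have "card {t\<in>T. e \<subseteq> t} = 2" using ie unfolding interior_edge_def by auto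
  then obtain t1 t2 where tt: "{t\<in>T. e \<subseteq> t} = {t1,t2}" and t12: "t1 \<noteq> t2" by (auto simp: card_2_iff)
  have t1T: "t1 \<in> T" "e \<subseteq> t1" and t2T: "t2 \<in> T" "e \<subseteq> t2" using tt by blast+
  have n1: "ndg3 t1" "ndg3 t2" using Inv_ndg[OF I t1T(1)] Inv_ndg[OF I t2T(1)] by auto
  have cdt: "c \<in> t1" "d \<in> t1" "c \<in> t2" "d \<in> t2" using t1T(2) t2T(2) e by auto
  obtain a where t1: "t1 = {c,d,a}" and Da: "det2 (d - c) (a - c) \<noteq> 0"
    using ndg_pick[OF n1(1) cdt(1,2) cd] by blast
  obtain b where t2: "t2 = {c,d,b}" and Db: "det2 (d - c) (b - c) \<noteq> 0"
    using ndg_pick[OF n1(2) cdt(3,4) cd] by blast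
  have da: "c \<noteq> a" "d \<noteq> a" using det_distinct[OF Da] by auto
  have db: "c \<noteq> b" "d \<noteq> b" using det_distinct[OF Db] by auto
  have ab: "a \<noteq> b" using t12 t1 t2 by blast
  have opp: "det2 (d - c) (a - c) * det2 (d - c) (b - c) < 0"
  proof (rule ccontr)
    assume "\<not> ?thesis"
    moreover have "det2 (d - c) (a - c) * det2 (d - c) (b - c) \<noteq> 0" using Da Db by simp
    ultimately have "0 < det2 (d - c) (a - c) * det2 (d - c) (b - c)" by linarith
    then have "interior (convex hull {c,d,a}) \<inter> interior (convex hull {c,d,b}) \<noteq> {}"
      by (rule same_side_meet')
    then show False using Inv_disj[OF I t1T(1) t2T(1) t12] unfolding t1 t2 by simp
  qed
  have q: "quad T e = {c,d,a,b}" unfolding quad_def tt t1 t2 by auto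
  have nd: "new_diag T e = {a,b}" unfolding new_diag_def q unfolding e using da db by auto
  have conv: "\<forall>p\<in>{c,d,a,b}. p \<notin> convex hull ({c,d,a,b} - {p})" using cq unfolding convex_quad_def q by auto
  have "{c,d,a,b} - {c} = {d,a,b}" "{c,d,a,b} - {d} = {c,a,b}" using cd da db by auto
  then have nc: "c \<notin> convex hull {d,a,b}" and ndd: "d \<notin> convex hull {c,a,b}" using conv by auto
  have "{insert x (new_diag T e) | x. x \<in> e} = {{c,a,b},{d,a,b}}" unfolding nd unfolding e by (rule ins_pair_set)
  then have df: "do_flip T e = {t\<in>T. \<not> e \<subseteq> t} \<union> {{c,a,b},{d,a,b}}" unfolding do_flip_def by simp
  have tt': "{t\<in>T. e \<subseteq> t} = {{c,d,a},{c,d,b}}" using tt t1 t2 by simp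
  show ?thesis
    by (rule that[OF e cd tt' ab da(1)[symmetric] da(2)[symmetric] db(1)[symmetric] db(2)[symmetric] opp nd nc ndd df])
qed

definition newtris :: "triang \<Rightarrow> edge \<Rightarrow> triang" where
  "newtris T e = {insert x (new_diag T e) | x. x \<in> e}"

lemma do_flip_newtris: "do_flip T e = {t\<in>T. \<not> e \<subseteq> t} \<union> newtris T e"
  unfolding do_flip_def newtris_def by simp

lemma flip_hull:
  assumes I: "Inv T" and adm: "admissible T e" and tn: "t \<in> newtris T e" and x: "x \<in> convex hull t"
  shows "\<exists>t'\<in>T. e \<subseteq> t' \<and> x \<in> convex hull t'"
proof -
  obtain c d a b where fs: "e = {c,d}" "c \<noteq> d" "{t\<in>T. e \<subseteq> t} = {{c,d,a},{c,d,b}}"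
    "a \<noteq> b" "a \<noteq> c" "a \<noteq> d" "b \<noteq> c" "b \<noteq> d"
    "det2 (d - c) (a - c) * det2 (d - c) (b - c) < 0" "new_diag T e = {a,b}"
    "c \<notin> convex hull {d,a,b}" "d \<notin> convex hull {c,a,b}"
    "do_flip T e = {t\<in>T. \<not> e \<subseteq> t} \<union> {{c,a,b},{d,a,b}}"
    by (rule flip_struct[OF I adm])
  note cr = crossing[OF fs(9) fs(11) fs(12)]
  have nt: "newtris T e = {{c,a,b},{d,a,b}}" unfolding newtris_def fs(10) unfolding fs(1) by (rule ins_pair_set)
  have "t = {c,a,b} \<or> t = {d,a,b}" using tn unfolding nt by simp
  then have "t = {a,b,c} \<or> t = {a,b,d}" using set3_perm[of c a b] set3_perm[of d a b] by simp
  then have "x \<in> convex hull {c,d,a} \<or> x \<in> convex hull {c,d,b}" using cr(2,3) x by blast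
  moreover have "{c,d,a} \<in> {t\<in>T. e \<subseteq> t}" "{c,d,b} \<in> {t\<in>T. e \<subseteq> t}" unfolding fs(3) by simp_all
  ultimately show ?thesis by blast
qed

lemma flip_Inv:
  assumes I: "Inv T" and adm: "admissible T e"
  shows "Inv (do_flip T e)"
proof -
  obtain c d a b where fs: "e = {c,d}" "c \<noteq> d" "{t\<in>T. e \<subseteq> t} = {{c,d,a},{c,d,b}}"
    "a \<noteq> b" "a \<noteq> c" "a \<noteq> d" "b \<noteq> c" "b \<noteq> d"
    "det2 (d - c) (a - c) * det2 (d - c) (b - c) < 0" "new_diag T e = {a,b}"
    "c \<notin> convex hull {d,a,b}" "d \<notin> convex hull {c,a,b}"
    "do_flip T e = {t\<in>T. \<not> e \<subseteq> t} \<union> {{c,a,b},{d,a,b}}"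
    by (rule flip_struct[OF I adm])
  note cr = crossing[OF fs(9) fs(11) fs(12)]
  have Dc: "det2 (b - a) (c - a) \<noteq> 0" and Dd: "det2 (b - a) (d - a) \<noteq> 0" using cr(1) by auto
  have Da: "det2 (d - c) (a - c) \<noteq> 0" and Db: "det2 (d - c) (b - c) \<noteq> 0" using fs(9) by auto
  have n1: "ndg3 {c,a,b}" unfolding ndg3_def set3_perm[of c a b] using Dc by blast
  have n2: "ndg3 {d,a,b}" unfolding ndg3_def set3_perm[of d a b] using Dd by blast
  have dis12: "interior (convex hull {c,a,b}) \<inter> interior (convex hull {d,a,b}) = {}"
    using opp_side_disjoint[OF cr(1)] by (simp add: insert_commute)
  have "{c,d,a} \<in> {t\<in>T. e \<subseteq> t}" "{c,d,b} \<in> {t\<in>T. e \<subseteq> t}" unfolding fs(3) by simp_all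
  then have t1T: "{c,d,a} \<in> T" "{c,d,b} \<in> T" by simp_all
  have oldnew: "interior (convex hull r) \<inter> interior (convex hull n) = {}"
    if rT: "r \<in> T" and re: "\<not> e \<subseteq> r" and nn: "n \<in> {{c,a,b},{d,a,b}}" for r n
  proof (rule ccontr)
    assume "interior (convex hull r) \<inter> interior (convex hull n) \<noteq> {}"
    then obtain x where x1: "x \<in> interior (convex hull r)" and x2: "x \<in> interior (convex hull n)" by blast
    have "x \<in> convex hull n" using x2 interior_subset by blast
    moreover have "n = {a,b,c} \<or> n = {a,b,d}" using nn set3_perm[of c a b] set3_perm[of d a b] by simp
    ultimately have "x \<in> convex hull {a,b,c} \<or> x \<in> convex hull {a,b,d}" by blast
    then have "x \<in> convex hull {c,d,a} \<or> x \<in> convex hull {c,d,b}" using cr(2,3) by blast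
    then show False
    proof
      assume "x \<in> convex hull {c,d,a}"
      then have "interior (convex hull r) \<inter> interior (convex hull {c,d,a}) \<noteq> {}"
        using open_meets_hull3[OF Da open_interior[of "convex hull r"]] x1 by blast
      moreover have "r \<noteq> {c,d,a}" using re fs(1) by blast
      ultimately show False using Inv_disj[OF I rT t1T(1)] by simp
    next
      assume "x \<in> convex hull {c,d,b}"
      then have "interior (convex hull r) \<inter> interior (convex hull {c,d,b}) \<noteq> {}"
        using open_meets_hull3[OF Db open_interior[of "convex hull r"]] x1 by blast
      moreover have "r \<noteq> {c,d,b}" using re fs(1) by blast
      ultimately show False using Inv_disj[OF I rT t1T(2)] by simp
    qed
  qed
  show ?thesis unfolding Inv_def fs(13)
  proof (intro conjI ballI impI)
    fix t assume "t \<in> {t\<in>T. \<not> e \<subseteq> t} \<union> {{c,a,b},{d,a,b}}"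
    then have "t \<in> T \<or> t = {c,a,b} \<or> t = {d,a,b}" by blast
    then show "ndg3 t" using Inv_ndg[OF I] n1 n2 by blast
  next
    fix t s assume t: "t \<in> {t\<in>T. \<not> e \<subseteq> t} \<union> {{c,a,b},{d,a,b}}" and s: "s \<in> {t\<in>T. \<not> e \<subseteq> t} \<union> {{c,a,b},{d,a,b}}"
      and ne: "t \<noteq> s"
    show "interior (convex hull t) \<inter> interior (convex hull s) = {}"
    proof (cases "t \<in> {{c,a,b},{d,a,b}}")
      case tn: True
      show ?thesis
      proof (cases "s \<in> {{c,a,b},{d,a,b}}")
        case True
        have "(t = {c,a,b} \<and> s = {d,a,b}) \<or> (t = {d,a,b} \<and> s = {c,a,b})" using True tn ne by blast
        then show ?thesis
        proof
          assume "t = {c,a,b} \<and> s = {d,a,b}" then show ?thesis using dis12 by simp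
        next
          assume "t = {d,a,b} \<and> s = {c,a,b}" then show ?thesis using dis12 by (simp add: Int_commute)
        qed
      next
        case False
        then have "s \<in> T" "\<not> e \<subseteq> s" using s by blast+
        then have "interior (convex hull s) \<inter> interior (convex hull t) = {}" using oldnew tn by blast
        then show ?thesis by (simp add: Int_commute)
      qed
    next
      case to: False
      show ?thesis
      proof (cases "s \<in> {{c,a,b},{d,a,b}}")
        case True
        have "t \<in> T" "\<not> e \<subseteq> t" using t to by blast+
        then show ?thesis using oldnew True by blast
      next
        case False
        then have "s \<in> T" "t \<in> T" using s t to by blast+
        then show ?thesis using Inv_disj[OF I _ _ ne] by simp
      qed
    qed
  qed
qed

lemma apply_flips_append: "apply_flips T (xs @ ys) = apply_flips (apply_flips T xs) ys"
  by (induction xs arbitrary: T) auto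

lemma valid_append: "valid T (xs @ ys) \<longleftrightarrow> valid T xs \<and> valid (apply_flips T xs) ys"
  by (induction xs arbitrary: T) auto

lemma tri_at_0: "tri_at T F 0 = T" unfolding tri_at_def by simp

lemma tri_at_Suc: "j < length F \<Longrightarrow> tri_at T F (Suc j) = do_flip (tri_at T F j) (F ! j)"
  unfolding tri_at_def by (simp add: take_Suc_conv_app_nth apply_flips_append)

lemma valid_adm:
  assumes "valid T F" "j < length F" shows "admissible (tri_at T F j) (F ! j)"
proof -
  have "F = take j F @ (F ! j # drop (Suc j) F)" using assms(2) by (simp add: id_take_nth_drop)
  then have "valid T (take j F @ (F ! j # drop (Suc j) F))" using assms(1) by simp
  then show ?thesis unfolding valid_append tri_at_def by simp
qed

lemma Inv_tri_at:
  assumes "Inv T" "valid T F" shows "j \<le> length F \<Longrightarrow> Inv (tri_at T F j)"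
proof (induction j)
  case 0 then show ?case using assms by (simp add: tri_at_0)
next
  case (Suc j)
  then show ?case using flip_Inv valid_adm[OF assms(2)] by (simp add: tri_at_Suc)
qed

fun umk :: "triang \<Rightarrow> edge list \<Rightarrow> nat set \<Rightarrow> nat \<Rightarrow> nat \<Rightarrow> triang" where
  "umk T F R a 0 = tri_at T F a"
| "umk T F R a (Suc n) = {t \<in> umk T F R a n. \<not> F ! (a + n) \<subseteq> t} \<union>
     (if a + n \<in> R then {} else newtris (tri_at T F (a + n)) (F ! (a + n)))"

definition marked :: "triang \<Rightarrow> edge list \<Rightarrow> nat set \<Rightarrow> nat \<Rightarrow> triang \<Rightarrow> bool" where
  "marked T F R n U \<longleftrightarrow> (\<forall>r \<in> tri_at T F n - U. \<exists>c\<in>R. c < n \<and> phi T F c \<subseteq> r \<and>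
       (\<forall>p. c < p \<and> p < n \<longrightarrow> F ! p \<noteq> phi T F c))"

lemma removed_unmarked:
  assumes Rcl: "\<And>c j. c \<in> R \<Longrightarrow> (c, j) \<in> adj T F \<Longrightarrow> j \<in> R"
    and mk: "marked T F R j U" and jl: "j < length F" and jR: "j \<notin> R"
    and tT: "t \<in> tri_at T F j" and et: "F ! j \<subseteq> t"
  shows "t \<in> U"
proof (rule ccontr)
  assume "t \<notin> U"
  then have tU: "t \<in> tri_at T F j - U" using tT by simp
  have "\<forall>r \<in> tri_at T F j - U. \<exists>c\<in>R. c < j \<and> phi T F c \<subseteq> r \<and>
       (\<forall>p. c < p \<and> p < j \<longrightarrow> F ! p \<noteq> phi T F c)" using mk unfolding marked_def .
  then have "\<exists>c\<in>R. c < j \<and> phi T F c \<subseteq> t \<and> (\<forall>p. c < p \<and> p < j \<longrightarrow> F ! p \<noteq> phi T F c)"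
    using tU by (rule bspec)
  then obtain c where c: "c \<in> R" "c < j" "phi T F c \<subseteq> t" "\<forall>p. c < p \<and> p < j \<longrightarrow> F ! p \<noteq> phi T F c"
    by blast
  have "phi T F c = F ! j \<or> share_triangle (tri_at T F j) (phi T F c) (F ! j)"
    unfolding share_triangle_def using c(3) et tT by blast
  then have "(c, j) \<in> adj T F" unfolding adj_def using c jl by blast
  then show False using Rcl c(1) jR by blast
qed

lemma umk_inv:
  assumes val: "valid T F" and IT: "Inv T" and aR: "a \<in> R"
    and Rcl: "\<And>c j. c \<in> R \<Longrightarrow> (c, j) \<in> adj T F \<Longrightarrow> j \<in> R"
  shows "a + n \<le> length F \<Longrightarrow> umk T F R a n \<subseteq> tri_at T F (a + n) \<and> marked T F R (a + n) (umk T F R a n)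
     \<and> (1 \<le> n \<longrightarrow> \<Union> ((\<lambda>t. convex hull t) ` umk T F R a n) \<subseteq> \<Union> ((\<lambda>t. convex hull t) ` umk T F R a 1))"
proof (induction n)
  case 0 then show ?case by (simp add: marked_def)
next
  case (Suc n)
  define j where "j = a + n"
  have jl: "j < length F" using Suc.prems unfolding j_def by simp
  have IH: "umk T F R a n \<subseteq> tri_at T F j" "marked T F R j (umk T F R a n)"
    "1 \<le> n \<longrightarrow> \<Union> ((\<lambda>t. convex hull t) ` umk T F R a n) \<subseteq> \<Union> ((\<lambda>t. convex hull t) ` umk T F R a 1)"
    using Suc unfolding j_def by auto
  have Tj1: "tri_at T F (Suc j) = {t \<in> tri_at T F j. \<not> F ! j \<subseteq> t} \<union> newtris (tri_at T F j) (F ! j)"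
    using tri_at_Suc[OF jl] do_flip_newtris by simp
  have U1: "umk T F R a (Suc n) = {t \<in> umk T F R a n. \<not> F ! j \<subseteq> t} \<union>
     (if j \<in> R then {} else newtris (tri_at T F j) (F ! j))" unfolding j_def by simp
  have phisub: "phi T F j \<subseteq> r" if "r \<in> newtris (tri_at T F j) (F ! j)" for r
    using that unfolding newtris_def phi_def by auto
  have A: "umk T F R a (Suc n) \<subseteq> tri_at T F (a + Suc n)"
    using IH(1) unfolding U1 j_def[symmetric] using Tj1 by (auto simp: j_def)
  have B: "marked T F R (a + Suc n) (umk T F R a (Suc n))"
    unfolding marked_def
  proof
    fix r assume r: "r \<in> tri_at T F (a + Suc n) - umk T F R a (Suc n)"
    have r': "r \<in> tri_at T F (Suc j)" "r \<notin> umk T F R a (Suc n)" using r unfolding j_def by auto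
    show "\<exists>c\<in>R. c < a + Suc n \<and> phi T F c \<subseteq> r \<and> (\<forall>p. c < p \<and> p < a + Suc n \<longrightarrow> F ! p \<noteq> phi T F c)"
    proof (cases "r \<in> newtris (tri_at T F j) (F ! j)")
      case True
      then have "j \<in> R" using r'(2) unfolding U1 by (auto split: if_splits)
      then show ?thesis using phisub[OF True] unfolding j_def by (intro bexI[of _ "a + n"]) auto
    next
      case False
      then have rT: "r \<in> tri_at T F j" "\<not> F ! j \<subseteq> r" using r'(1) Tj1 by auto
      then have "r \<notin> umk T F R a n" using r'(2) unfolding U1 by auto
      then have rU: "r \<in> tri_at T F j - umk T F R a n" using rT by simp
      have "\<forall>r \<in> tri_at T F j - umk T F R a n. \<exists>c\<in>R. c < j \<and> phi T F c \<subseteq> r \<and>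
         (\<forall>p. c < p \<and> p < j \<longrightarrow> F ! p \<noteq> phi T F c)" using IH(2) unfolding marked_def .
      then have "\<exists>c\<in>R. c < j \<and> phi T F c \<subseteq> r \<and> (\<forall>p. c < p \<and> p < j \<longrightarrow> F ! p \<noteq> phi T F c)"
        using rU by (rule bspec)
      then obtain c where c: "c \<in> R" "c < j" "phi T F c \<subseteq> r" "\<forall>p. c < p \<and> p < j \<longrightarrow> F ! p \<noteq> phi T F c"
        by blast
      have "F ! j \<noteq> phi T F c" using c(3) rT(2) by auto
      then have "\<forall>p. c < p \<and> p < a + Suc n \<longrightarrow> F ! p \<noteq> phi T F c" using c(4) unfolding j_def
        by (metis add_Suc_right less_Suc_eq)
      then show ?thesis using c unfolding j_def by (intro bexI[of _ c]) auto
    qed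
  qed
  have C: "\<Union> ((\<lambda>t. convex hull t) ` umk T F R a (Suc n)) \<subseteq> \<Union> ((\<lambda>t. convex hull t) ` umk T F R a 1)"
  proof (cases "n = 0")
    case True then show ?thesis by simp
  next
    case n0: False
    have sub: "\<Union> ((\<lambda>t. convex hull t) ` umk T F R a n) \<subseteq> \<Union> ((\<lambda>t. convex hull t) ` umk T F R a 1)"
      using IH(3) n0 by simp
    show ?thesis
    proof (cases "j \<in> R")
      case True
      then have "umk T F R a (Suc n) \<subseteq> umk T F R a n" unfolding U1 by auto
      then show ?thesis using sub by blast
    next
      case jR: False
      have Ij: "Inv (tri_at T F j)" using Inv_tri_at[OF IT val] jl by simp
      have adm: "admissible (tri_at T F j) (F ! j)" using valid_adm[OF val jl] .
      have "convex hull t \<subseteq> \<Union> ((\<lambda>t. convex hull t) ` umk T F R a n)"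
        if tn: "t \<in> newtris (tri_at T F j) (F ! j)" for t
      proof
        fix x assume "x \<in> convex hull t"
        then obtain t' where t': "t' \<in> tri_at T F j" "F ! j \<subseteq> t'" "x \<in> convex hull t'"
          using flip_hull[OF Ij adm tn] by blast
        have "t' \<in> umk T F R a n" using removed_unmarked[OF Rcl IH(2) jl jR t'(1,2)] .
        then show "x \<in> \<Union> ((\<lambda>t. convex hull t) ` umk T F R a n)" using t'(3) by blast
      qed
      then have "\<Union> ((\<lambda>t. convex hull t) ` umk T F R a (Suc n)) \<subseteq> \<Union> ((\<lambda>t. convex hull t) ` umk T F R a n)"
        unfolding U1 using jR by auto
      then show ?thesis using sub by blast
    qed
  qed
  show ?case using A B C by simp
qed

lemma reach:
  assumes val: "valid T F" and IT: "Inv T" and ah: "a < h" and hl: "h < length F"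
    and eq: "F ! a = F ! h"
  shows "(a, h) \<in> (adj T F)\<^sup>+"
proof (rule ccontr)
  assume nr: "(a, h) \<notin> (adj T F)\<^sup>+"
  define R where "R = {j. j = a \<or> (a, j) \<in> (adj T F)\<^sup>+}"
  have aR: "a \<in> R" unfolding R_def by simp
  have Rcl: "j \<in> R" if "c \<in> R" "(c, j) \<in> adj T F" for c j
    using that unfolding R_def by (auto intro: trancl_into_trancl)
  have hR: "h \<notin> R" using nr ah unfolding R_def by auto
  define n where "n = h - a"
  have an: "a + n = h" and n1: "1 \<le> n" using ah unfolding n_def by auto
  have inv: "umk T F R a n \<subseteq> tri_at T F h" "marked T F R h (umk T F R a n)"
    "\<Union> ((\<lambda>t. convex hull t) ` umk T F R a n) \<subseteq> \<Union> ((\<lambda>t. convex hull t) ` umk T F R a 1)"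
    using umk_inv[OF val IT aR Rcl, where n=n] an n1 hl by auto
  have u1: "umk T F R a 1 = {t \<in> tri_at T F a. \<not> F ! a \<subseteq> t}"
    using aR by (simp add: One_nat_def)
  have al: "a < length F" using ah hl by simp
  have Ia: "Inv (tri_at T F a)" and Ih: "Inv (tri_at T F h)" using Inv_tri_at[OF IT val] al hl by auto
  have adma: "admissible (tri_at T F a) (F ! a)" using valid_adm[OF val al] .
  have admh: "admissible (tri_at T F h) (F ! h)" using valid_adm[OF val hl] .
  obtain c d p q where fs: "F ! a = {c,d}" "c \<noteq> d" "{t\<in>tri_at T F a. F ! a \<subseteq> t} = {{c,d,p},{c,d,q}}"
    "det2 (d - c) (p - c) * det2 (d - c) (q - c) < 0"
    by (rule flip_struct[OF Ia adma]) blast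
  have "card {t\<in>tri_at T F h. F ! h \<subseteq> t} = 2" using admh unfolding admissible_def interior_edge_def by auto
  then have "{t\<in>tri_at T F h. F ! h \<subseteq> t} \<noteq> {}" by (intro notI) simp
  then obtain s where sT: "s \<in> tri_at T F h" and es: "F ! h \<subseteq> s" by blast
  have su: "s \<in> umk T F R a n" using removed_unmarked[OF Rcl inv(2) hl hR sT es] .
  have "ndg3 s" using Inv_ndg[OF Ih sT] .
  then obtain z where sz: "s = {c,d,z}" and Dz: "det2 (d - c) (z - c) \<noteq> 0"
    using ndg_pick[of s c d] es eq fs(1,2) by auto
  obtain w where w: "w \<in> {p,q}" and ww: "0 < det2 (d - c) (w - c) * det2 (d - c) (z - c)"
  proof -
    let ?gp = "det2 (d - c) (p - c)" and ?gq = "det2 (d - c) (q - c)" and ?gz = "det2 (d - c) (z - c)"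
    have "0 < ?gp * ?gz \<or> 0 < ?gq * ?gz" using fs(4) Dz
      by (auto simp: mult_less_0_iff zero_less_mult_iff linorder_neq_iff)
    then show ?thesis using that by blast
  qed
  obtain x where x1: "x \<in> interior (convex hull {c,d,w})" and x2: "x \<in> interior (convex hull {c,d,z})"
    using same_side_meet'[OF ww] by blast
  have "x \<in> convex hull s" using x2 interior_subset sz by blast
  then obtain r where rT: "r \<in> tri_at T F a" and re: "\<not> F ! a \<subseteq> r" and xr: "x \<in> convex hull r"
    using inv(3) su u1 by blast
  have "ndg3 r" using Inv_ndg[OF Ia rT] .
  then obtain r1 r2 r3 where r: "r = {r1,r2,r3}" and Dr: "det2 (r2 - r1) (r3 - r1) \<noteq> 0"
    unfolding ndg3_def by blast
  have "interior (convex hull {c,d,w}) \<inter> interior (convex hull r) \<noteq> {}"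
    using open_meets_hull3[OF Dr open_interior[of "convex hull {c,d,w}"]] x1 xr r by blast
  moreover have "{c,d,w} \<in> tri_at T F a" using fs(3) w by blast
  moreover have "r \<noteq> {c,d,w}" using re fs(1) by auto
  ultimately show False using Inv_disj[OF Ia rT] by blast
qed

lemma lift_comp:
  assumes "(i, h) \<in> (adj T F)\<^sup>+" and "i \<in> component T F i0"
  shows "(i, h) \<in> (adj T F \<inter> (component T F i0 \<times> component T F i0))\<^sup>+ \<and> h \<in> component T F i0"
  using assms(1)
proof (induction rule: trancl_induct)
  case (base y)
  have "(i0, i) \<in> (adj T F \<union> (adj T F)\<inverse>)\<^sup>*" using assms(2) unfolding component_def by auto
  then have "(i0, y) \<in> (adj T F \<union> (adj T F)\<inverse>)\<^sup>*" using base by (meson UnI1 rtrancl.rtrancl_into_rtrancl)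
  moreover have "y < length F" using base unfolding adj_def by auto
  ultimately have "y \<in> component T F i0" unfolding component_def by auto
  then show ?case using base assms(2) by auto
next
  case (step y z)
  have "(i0, y) \<in> (adj T F \<union> (adj T F)\<inverse>)\<^sup>*" using step unfolding component_def by auto
  then have "(i0, z) \<in> (adj T F \<union> (adj T F)\<inverse>)\<^sup>*" using step by (meson UnI1 rtrancl.rtrancl_into_rtrancl)
  moreover have "z < length F" using step unfolding adj_def by auto
  ultimately have "z \<in> component T F i0" unfolding component_def by auto
  then show ?case using step by (meson IntI SigmaI trancl.trancl_into_trancl)
qed

theorem lemma5:
  fixes P :: "pt set" and Ti Tf :: triang and k :: nat and F :: "edge list"
    and C :: "nat set" and i h :: nat
  assumes "normalized P Ti Tf k F"
    and "C \<in> components Ti F"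
    and "i \<in> C" and "h \<in> C" and "i < h"
    and "F ! i = F ! h"
  shows "(i, h) \<in> (adj Ti F \<inter> (C \<times> C))\<^sup>+"
proof -
  have sol: "is_solution P Ti Tf k F" using assms(1) unfolding normalized_def by auto
  then have tri: "triangulation P Ti" and val: "valid Ti F" unfolding is_solution_def by auto
  obtain i0 where C: "C = component Ti F i0" using assms(2) unfolding components_def by auto
  have hl: "h < length F" using assms(4) unfolding C component_def by auto
  have "(i, h) \<in> (adj Ti F)\<^sup>+" using reach[OF val Inv_init[OF tri] assms(5) hl assms(6)] .
  then show ?thesis using lift_comp[of i h Ti F i0] assms(3) unfolding C by auto
qed

end
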